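(* Let $\Delta$ be a simplicial polytopal fan in $\mathbb{R}^d$ with ray generators $\mathbf{v}_1,\ldots,\mathbf{v}_n$ and let $m\ge1$. Let $\Delta^m$ be the polyhedral fan in $\mathbb{R}^{m\times d}$ whose cells are the products $\sigma_1\times\cdots\times\sigma_m$ with $\sigma_j\in\Delta$ (the $j$-th factor constraining the $j$-th row). Let $\Upsilon$ be the collection of all closed cones $\overline{U_G}$, $G\in\mathcal{G}$, such that $G$ has no matching of size $n$. Then $\Upsilon$ is a polyhedral subcomplex of $\Delta^m$.
   Context: A fan is simplicial if every cone is generated by linearly independent vectors; polytopal if it is the normal fan of a polytope. For $\mathbf{u}\in\mathbb{R}^d$, with $\sigma$ the cone of $\Delta$ containing $\mathbf{u}$ in its relative interior and $\mathbf{u}=\sum_{k\in I_\sigma}\lambda_k\mathbf{v}_k$ over the generators of $\sigma$, set $[\mathbf{u}]_i=\lambda_i$ for $i\in I_\sigma$ and $0$ otherwise. For $U\in\mathbb{R}^{m\times d}$ with rows $\mathbf{u}^{(1)},\ldots,\mathbf{u}^{(m)}$, $G_U$ is the bipartite graph on $[n]\sqcup[m]$ with $i\in[n]$ adjacent to $j\in[m]$ iff $[\mathbf{u}^{(j)}]_i>0$. $\mathcal{G}$ is the set of graphs of the form $G_U$, and for $G\in\mathcal{G}$, $U_G=\{U\in\mathbb{R}^{m\times d}\colon G_U=G\}$; one has $U_{G_U}=\operatorname{relint}\sigma(\mathbf{u}^{(1)})\times\cdots\times\operatorname{relint}\sigma(\mathbf{u}^{(m)})$, where $\sigma(\mathbf{u})$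 is the cone of $\Delta$ containing $\mathbf{u}$ in its relative interior, and the closures $\overline{U_G}$ are exactly the cells of $\Delta^m$. *)

theory Defs
  imports "HOL-Analysis.Analysis"
begin

definition normal_cone :: "('a::euclidean_space) set \<Rightarrow> 'a set \<Rightarrow> 'a set" where
  "normal_cone P F = {c. \<forall>x\<in>F. \<forall>y\<in>P. c \<bullet> y \<le> c \<bullet> x}"

definition normal_fan :: "('a::euclidean_space) set \<Rightarrow> 'a set set" where
  "normal_fan P = {normal_cone P F | F. F face_of P \<and> F \<noteq> {}}"

definition polytopal_fan :: "('a::euclidean_space) set set \<Rightarrow> bool" where
  "polytopal_fan \<Delta> \<longleftrightarrow> (\<exists>P. polytope P \<and> \<Delta> = normal_fan P)"

definition simplicial_fan :: "('a::euclidean_space) set set \<Rightarrow> bool" where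
  "simplicial_fan \<Delta> \<longleftrightarrow> (\<forall>\<sigma>\<in>\<Delta>. \<exists>S. independent S \<and> \<sigma> = convex_cone hull S)"

definition ray_generators :: "('a::euclidean_space) set set \<Rightarrow> ('n \<Rightarrow> 'a) \<Rightarrow> bool" where
  "ray_generators \<Delta> v \<longleftrightarrow>
     (\<forall>i. v i \<noteq> 0) \<and> inj (\<lambda>i. convex_cone hull {v i}) \<and>
     {\<sigma>\<in>\<Delta>. aff_dim \<sigma> = 1} = range (\<lambda>i. convex_cone hull {v i})"

definition cone_of :: "('a::euclidean_space) set set \<Rightarrow> 'a \<Rightarrow> 'a set" where
  "cone_of \<Delta> u = (THE \<sigma>. \<sigma> \<in> \<Delta> \<and> u \<in> rel_interior \<sigma>)"

definition gen_idx :: "('n \<Rightarrow> 'a::euclidean_space) \<Rightarrow> 'a set \<Rightarrow> 'n set" where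
  "gen_idx v \<sigma> = {k. v k \<in> \<sigma>}"

definition coord :: "('a::euclidean_space) set set \<Rightarrow> ('n::finite \<Rightarrow> 'a) \<Rightarrow> 'a \<Rightarrow> 'n \<Rightarrow> real" where
  "coord \<Delta> v u i =
     (THE c. (\<forall>k. k \<notin> gen_idx v (cone_of \<Delta> u) \<longrightarrow> c k = 0) \<and>
             u = (\<Sum>k\<in>gen_idx v (cone_of \<Delta> u). c k *\<^sub>R v k)) i"

(* G_U as its edge set: (i,j) with i \<in> [n], j \<in> [m] *)
definition graph_of :: "('a::euclidean_space) set set \<Rightarrow> ('n::finite \<Rightarrow> 'a) \<Rightarrow> 'a ^ 'm \<Rightarrow> ('n \<times> 'm) set" where
  "graph_of \<Delta> v U = {(i, j). coord \<Delta> v (U $ j) i > 0}"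

definition graphs :: "('a::euclidean_space) set set \<Rightarrow> ('n::finite \<Rightarrow> 'a) \<Rightarrow> ('n \<times> 'm::finite) set set" where
  "graphs \<Delta> v = range (graph_of \<Delta> v)"

definition U_of :: "('a::euclidean_space) set set \<Rightarrow> ('n::finite \<Rightarrow> 'a) \<Rightarrow> ('n \<times> 'm::finite) set \<Rightarrow> ('a ^ 'm) set" where
  "U_of \<Delta> v G = {U. graph_of \<Delta> v U = G}"

definition is_matching :: "('n \<times> 'm) set \<Rightarrow> ('n \<times> 'm) set \<Rightarrow> bool" where
  "is_matching E M \<longleftrightarrow> M \<subseteq> E \<and>
     (\<forall>e\<in>M. \<forall>e'\<in>M. e \<noteq> e' \<longrightarrow> fst e \<noteq> fst e' \<and> snd e \<noteq> snd e')"

definition has_matching_of_size :: "('n \<times> 'm) set \<Rightarrow> nat \<Rightarrow> bool" where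
  "has_matching_of_size E k \<longleftrightarrow> (\<exists>M. is_matching E M \<and> finite M \<and> card M = k)"

definition product_fan :: "('a::euclidean_space) set set \<Rightarrow> ('a ^ 'm::finite) set set" where
  "product_fan \<Delta> = {{U. \<forall>j. U $ j \<in> \<sigma> j} | \<sigma>. \<forall>j. \<sigma> j \<in> \<Delta>}"

definition subcomplex :: "('a::euclidean_space) set set \<Rightarrow> 'a set set \<Rightarrow> bool" where
  "subcomplex \<Upsilon> F \<longleftrightarrow> \<Upsilon> \<subseteq> F \<and>
     (\<forall>C\<in>\<Upsilon>. \<forall>D. D face_of C \<and> D \<noteq> {} \<longrightarrow> D \<in> \<Upsilon>)"

end

theory Submission
  imports Defs
begin

definition amax :: "'a::euclidean_space set \<Rightarrow> 'a \<Rightarrow> 'a set" where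
  "amax P c = {x\<in>P. \<forall>y\<in>P. c \<bullet> y \<le> c \<bullet> x}"

lemma amax_sub: "amax P c \<subseteq> P" by (auto simp: amax_def)

lemma nc_iff: "F \<subseteq> P \<Longrightarrow> c \<in> normal_cone P F \<longleftrightarrow> F \<subseteq> amax P c"
  by (auto simp: normal_cone_def amax_def)

lemma nc_self: "c \<in> normal_cone P (amax P c)"
  by (auto simp: normal_cone_def amax_def)

lemma nc_antimono: "F \<subseteq> G \<Longrightarrow> normal_cone P G \<subseteq> normal_cone P F"
  by (auto simp: normal_cone_def)

lemma nc_eq: "normal_cone P F = (\<Inter>x\<in>F. \<Inter>y\<in>P. {c. c \<bullet> (y - x) \<le> 0})"
  by (auto simp: normal_cone_def inner_diff_right)

lemma hs_eq: "{c. c \<bullet> a \<le> b} = {c. a \<bullet> c \<le> b}"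
  by (simp add: inner_commute)

lemma diff_inner0: "(a - b) \<bullet> x = 0 \<longleftrightarrow> x \<bullet> a = x \<bullet> b"
  unfolding inner_diff_left inner_commute[of a x] inner_commute[of b x] by simp

lemma diff_inner_le0: "(a - b) \<bullet> x \<le> 0 \<longleftrightarrow> x \<bullet> a \<le> x \<bullet> b"
  unfolding inner_diff_left inner_commute[of a x] inner_commute[of b x] by simp

lemma nc_convex: "convex (normal_cone P F)"
  unfolding nc_eq hs_eq by (intro convex_INT convex_halfspace_le)

lemma nc_closed: "closed (normal_cone P F)"
  unfolding nc_eq hs_eq by (intro closed_INT ballI closed_halfspace_le)

lemma nc_conic: "conic (normal_cone P F)"
  unfolding conic_def normal_cone_def by (auto intro: mult_left_mono)

lemma nc_zero: "0 \<in> normal_cone P F"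
  by (auto simp: normal_cone_def)

lemma nc_convex_cone: "convex_cone (normal_cone P F)"
  using nc_convex nc_conic nc_zero unfolding convex_cone_def by blast

lemma amax_ne:
  assumes "compact P" "P \<noteq> {}"
  shows "amax P c \<noteq> {}"
proof -
  have "continuous_on P (\<lambda>x. c \<bullet> x)" by (intro continuous_intros)
  then obtain x where "x \<in> P" "\<forall>y\<in>P. c \<bullet> y \<le> c \<bullet> x"
    using continuous_attains_sup[OF assms] by blast
  then show ?thesis by (auto simp: amax_def)
qed

lemma amax_face:
  assumes "compact P" "convex P" "P \<noteq> {}"
  shows "amax P c face_of P"
proof -
  obtain x where x: "x \<in> amax P c" using amax_ne assms by blast
  have eq: "amax P c = P \<inter> {y. c \<bullet> y = c \<bullet> x}"
    using x by (auto simp: amax_def intro: order.antisym)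
  have le: "\<And>y. y \<in> P \<Longrightarrow> c \<bullet> y \<le> c \<bullet> x" using x by (auto simp: amax_def)
  show ?thesis unfolding eq by (rule face_of_Int_supporting_hyperplane_le[OF assms(2) le])
qed

lemma nc_exposed:
  assumes P: "compact P" "convex P" and F: "F face_of P" "F \<noteq> {}"
    and c: "c \<in> normal_cone P F"
  shows "normal_cone P (amax P c) face_of normal_cone P F"
proof -
  have PN: "P \<noteq> {}" using F face_of_imp_subset by blast
  have FA: "F \<subseteq> amax P c" using c nc_iff F face_of_imp_subset by blast
  have "convex (amax P c)" using amax_face[OF P PN] face_of_imp_convex by blast
  then obtain g where g: "g \<in> rel_interior (amax P c)"
    using amax_ne[OF P(1) PN] rel_interior_eq_empty by blast
  have gA: "g \<in> amax P c" using g rel_interior_subset by blast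
  obtain f0 where f0: "f0 \<in> F" using F by blast
  have le: "(g - f0) \<bullet> x \<le> 0" if "x \<in> normal_cone P F" for x
    using that f0 gA amax_sub[of P c] unfolding diff_inner_le0 normal_cone_def by blast
  have eq: "normal_cone P (amax P c) = normal_cone P F \<inter> {x. (g - f0) \<bullet> x = 0}"
  proof (intro equalityI subsetI)
    fix x assume x: "x \<in> normal_cone P (amax P c)"
    then have "x \<in> normal_cone P F" using nc_antimono[OF FA] by blast
    moreover have "x \<bullet> g = x \<bullet> f0"
    proof -
      have "x \<bullet> f0 \<le> x \<bullet> g" using x gA f0 FA amax_sub[of P c] unfolding normal_cone_def by blast
      moreover have "x \<bullet> g \<le> x \<bullet> f0" using x gA f0 FA amax_sub[of P c] unfolding normal_cone_def by blast
      ultimately show ?thesis by simp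
    qed
    ultimately show "x \<in> normal_cone P F \<inter> {x. (g - f0) \<bullet> x = 0}"
      by (simp add: diff_inner0)
  next
    fix x assume x: "x \<in> normal_cone P F \<inter> {x. (g - f0) \<bullet> x = 0}"
    then have xg: "x \<bullet> g = x \<bullet> f0" by (simp add: diff_inner0)
    have "g \<in> amax P x"
      using x xg f0 gA amax_sub[of P c] by (auto simp: normal_cone_def amax_def)
    then have "amax P c \<subseteq> amax P x"
      using subset_of_face_of[OF amax_face[OF P PN, of x] amax_sub[of P c]] g by blast
    then show "x \<in> normal_cone P (amax P c)" using nc_iff amax_sub by blast
  qed
  show ?thesis unfolding eq
    using face_of_Int_supporting_hyperplane_le[OF nc_convex le] by simp
qed

lemma nc_relint:
  assumes V: "finite V" "P = convex hull V" "P \<noteq> {}"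
  shows "c \<in> rel_interior (normal_cone P (amax P c))"
proof -
  define A where "A = amax P c"
  define N where "N = normal_cone P A"
  have cP: "compact P" using V by (simp add: compact_convex_hull finite_imp_compact)
  obtain f0 where f0: "f0 \<in> A" using amax_ne[OF cP V(3)] A_def by blast
  define L where "L = (\<Inter>f\<in>A. {x. (f - f0) \<bullet> x = 0})"
  have affL: "affine L" unfolding L_def by (intro affine_Inter) (auto intro: affine_hyperplane)
  have NL: "N \<subseteq> L"
  proof
    fix x assume x: "x \<in> N"
    have "x \<bullet> f = x \<bullet> f0" if "f \<in> A" for f
    proof -
      have "x \<bullet> f0 \<le> x \<bullet> f" using x that f0 amax_sub[of P c] unfolding N_def A_def normal_cone_def by blast
      moreover have "x \<bullet> f \<le> x \<bullet> f0" using x that f0 amax_sub[of P c] unfolding N_def A_def normal_cone_def by blast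
      ultimately show ?thesis by simp
    qed
    then show "x \<in> L" unfolding L_def by (simp add: diff_inner0)
  qed
  have affN: "affine hull N \<subseteq> L" using hull_minimal[OF NL, of affine] affL by blast
  define V' where "V' = V - A"
  have strict: "c \<bullet> p < c \<bullet> f0" if "p \<in> V'" for p
  proof -
    have pV: "p \<in> V" using that unfolding V'_def by simp
    have pP: "p \<in> P" using pV unfolding V(2) by (rule hull_inc)
    have "p \<notin> A" using that unfolding V'_def by simp
    then have "\<not> (\<forall>y\<in>P. c \<bullet> y \<le> c \<bullet> p)" using pP unfolding A_def amax_def by simp
    then obtain y where "y \<in> P" "c \<bullet> y > c \<bullet> p" by (auto simp: not_le)
    moreover have "c \<bullet> y \<le> c \<bullet> f0" using f0 `y \<in> P` unfolding A_def amax_def by simp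
    ultimately show ?thesis by simp
  qed
  have ev: "eventually (\<lambda>x. \<forall>p\<in>V'. 0 < x \<bullet> (f0 - p)) (nhds c)"
  proof (rule eventually_ball_finite)
    show "finite V'" using V V'_def by simp
    show "\<forall>p\<in>V'. eventually (\<lambda>x. 0 < x \<bullet> (f0 - p)) (nhds c)"
    proof
      fix p assume p: "p \<in> V'"
      have op: "open {x. (f0 - p) \<bullet> x > 0}" by (rule open_halfspace_gt)
      have "0 < c \<bullet> (f0 - p)" using strict[OF p] by (simp add: inner_diff_right)
      then have "c \<in> {x. (f0 - p) \<bullet> x > 0}" by (simp add: inner_commute)
      then show "eventually (\<lambda>x. 0 < x \<bullet> (f0 - p)) (nhds c)"
        unfolding eventually_nhds using op by (intro exI[of _ "{x. (f0 - p) \<bullet> x > 0}"]) (simp add: inner_commute)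
    qed
  qed
  then obtain e where e: "e > 0" "\<And>x. dist x c < e \<Longrightarrow> \<forall>p\<in>V'. 0 < x \<bullet> (f0 - p)"
    unfolding eventually_nhds_metric by blast
  have bN: "ball c e \<inter> affine hull N \<subseteq> N"
  proof
    fix x assume x: "x \<in> ball c e \<inter> affine hull N"
    then have xL: "x \<in> L" using affN by blast
    have xs: "\<forall>p\<in>V'. 0 < x \<bullet> (f0 - p)" using e x by (simp add: dist_commute)
    have "V \<subseteq> {y. x \<bullet> y \<le> x \<bullet> f0}"
    proof
      fix p assume p: "p \<in> V"
      show "p \<in> {y. x \<bullet> y \<le> x \<bullet> f0}"
      proof (cases "p \<in> A")
        case True then show ?thesis using xL unfolding L_def
          by (simp add: diff_inner0)
      next
        case False then have "p \<in> V'" using p V'_def by blast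
        then show ?thesis using xs by (auto simp: inner_diff_right)
      qed
    qed
    then have PH: "P \<subseteq> {y. x \<bullet> y \<le> x \<bullet> f0}"
      using V(2) hull_minimal[of V _ convex] convex_halfspace_le[of x "x \<bullet> f0"]
      by simp
    show "x \<in> N" unfolding N_def normal_cone_def
    proof (intro CollectI ballI)
      fix f y assume "f \<in> A" "y \<in> P"
      then have "x \<bullet> f = x \<bullet> f0" using xL unfolding L_def by (simp add: diff_inner0)
      then show "x \<bullet> y \<le> x \<bullet> f" using PH `y \<in> P` by auto
    qed
  qed
  have "c \<in> N" unfolding N_def A_def by (rule nc_self)
  then have "c \<in> N \<and> (\<exists>e. e > 0 \<and> ball c e \<inter> affine hull N \<subseteq> N)" using e(1) bN by blast
  then show ?thesis unfolding N_def A_def mem_rel_interior_ball[symmetric] .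
qed

lemma sum_in_cone:
  "finite T \<Longrightarrow> (\<And>t. t \<in> T \<Longrightarrow> f t \<in> convex_cone hull S) \<Longrightarrow> sum f T \<in> convex_cone hull S"
  by (induction T rule: finite_induct) (auto intro: convex_cone_hull_add convex_cone_hull_contains_0)

lemma sum_delta_scale:
  fixes s :: "'a::real_vector" and c :: real
  assumes "finite S" "s \<in> S"
  shows "(\<Sum>t\<in>S. (if t = s then c else 0) *\<^sub>R t) = c *\<^sub>R s"
proof -
  have "(\<Sum>t\<in>S. (if t = s then c else 0) *\<^sub>R t) = (\<Sum>t\<in>S. if t = s then c *\<^sub>R t else 0)"
    by (rule sum.cong) auto
  also have "\<dots> = c *\<^sub>R s" using assms by (simp add: sum.delta)
  finally show ?thesis .
qed

lemma cone_finite: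
  fixes S :: "'a::real_vector set"
  assumes fin: "finite S"
  shows "convex_cone hull S = {y. \<exists>a. (\<forall>t\<in>S. 0 \<le> a t) \<and> y = (\<Sum>t\<in>S. a t *\<^sub>R t)}" (is "_ = ?C")
proof
  show "convex_cone hull S \<subseteq> ?C"
  proof (rule hull_minimal)
    show "S \<subseteq> ?C"
    proof
      fix s assume s: "s \<in> S"
      have eq: "(\<Sum>t\<in>S. (if t = s then 1 else 0) *\<^sub>R t) = s" using sum_delta_scale[OF fin s, of 1] by simp
      show "s \<in> ?C" by (intro CollectI exI[of _ "\<lambda>t. if t = s then 1 else 0"] conjI) (simp_all add: eq)
    qed
    have ne: "?C \<noteq> {}" by (intro ex_in_conv[THEN iffD1] exI[of _ 0] CollectI exI[of _ "\<lambda>t. 0"]) simp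
    have cv: "convex ?C"
      unfolding convex_def
    proof (intro ballI allI impI)
      fix x y :: 'a and u w :: real
      assume x: "x \<in> ?C" and y: "y \<in> ?C" and uw: "0 \<le> u" "0 \<le> w" "u + w = 1"
      obtain a where a: "\<forall>t\<in>S. 0 \<le> a t" "x = (\<Sum>t\<in>S. a t *\<^sub>R t)" using x by blast
      obtain b where b: "\<forall>t\<in>S. 0 \<le> b t" "y = (\<Sum>t\<in>S. b t *\<^sub>R t)" using y by blast
      have "u *\<^sub>R x + w *\<^sub>R y = (\<Sum>t\<in>S. (u * a t + w * b t) *\<^sub>R t)"
        by (simp add: a b scaleR_sum_right sum.distrib scaleR_add_left)
      moreover have "\<forall>t\<in>S. 0 \<le> u * a t + w * b t"
        using a(1) b(1) uw(1,2) by (intro ballI add_nonneg_nonneg mult_nonneg_nonneg) auto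
      ultimately show "u *\<^sub>R x + w *\<^sub>R y \<in> ?C"
        by (intro CollectI exI[of _ "\<lambda>t. u * a t + w * b t"]) simp
    qed
    have cn: "conic ?C"
      unfolding conic_def
    proof (intro allI impI)
      fix x :: 'a and c :: real
      assume x: "x \<in> ?C" and c: "0 \<le> c"
      obtain a where a: "\<forall>t\<in>S. 0 \<le> a t" "x = (\<Sum>t\<in>S. a t *\<^sub>R t)" using x by blast
      have "c *\<^sub>R x = (\<Sum>t\<in>S. (c * a t) *\<^sub>R t)" by (simp add: a scaleR_sum_right)
      moreover have "\<forall>t\<in>S. 0 \<le> c * a t" using a(1) c by (intro ballI mult_nonneg_nonneg) auto
      ultimately show "c *\<^sub>R x \<in> ?C"
        by (intro CollectI exI[of _ "\<lambda>t. c * a t"]) simp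
    qed
    show "convex_cone ?C" using ne cv cn unfolding convex_cone_def by blast
  qed
  show "?C \<subseteq> convex_cone hull S"
  proof
    fix y assume "y \<in> ?C"
    then obtain a where a: "\<forall>t\<in>S. 0 \<le> a t" "y = (\<Sum>t\<in>S. a t *\<^sub>R t)" by blast
    show "y \<in> convex_cone hull S" unfolding a(2)
    proof (rule sum_in_cone[OF fin])
      fix t assume t: "t \<in> S"
      show "a t *\<^sub>R t \<in> convex_cone hull S"
        by (rule convex_cone_hull_mul[OF hull_inc[OF t]]) (use a(1) t in blast)
    qed
  qed
qed

lemma cone_sing: "convex_cone hull {x} = {\<mu> *\<^sub>R x | \<mu>. \<mu> \<ge> 0}"
proof -
  have "convex_cone hull {x} = {y. \<exists>a. (\<forall>t\<in>{x}. 0 \<le> a t) \<and> y = (\<Sum>t\<in>{x}. a t *\<^sub>R t)}"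
    by (rule cone_finite) simp
  also have "\<dots> = {\<mu> *\<^sub>R x | \<mu>. \<mu> \<ge> 0}"
  proof (intro equalityI subsetI)
    fix y assume "y \<in> {y. \<exists>a. (\<forall>t\<in>{x}. 0 \<le> a t) \<and> y = (\<Sum>t\<in>{x}. a t *\<^sub>R t)}"
    then obtain a where "0 \<le> a x" "y = a x *\<^sub>R x" by auto
    then show "y \<in> {\<mu> *\<^sub>R x | \<mu>. \<mu> \<ge> 0}" by blast
  next
    fix y assume "y \<in> {\<mu> *\<^sub>R x | \<mu>. \<mu> \<ge> 0}"
    then obtain m where "0 \<le> m" "y = m *\<^sub>R x" by blast
    then show "y \<in> {y. \<exists>a. (\<forall>t\<in>{x}. 0 \<le> a t) \<and> y = (\<Sum>t\<in>{x}. a t *\<^sub>R t)}"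
      by (intro CollectI exI[of _ "\<lambda>t. m"]) simp
  qed
  finally show ?thesis .
qed

lemma indep_fin: "independent (S :: 'a::euclidean_space set) \<Longrightarrow> finite S"
  by (rule finiteI_independent)

lemma indep_coeff_unique:
  fixes S :: "'a::euclidean_space set"
  assumes ind: "independent S" and eq: "(\<Sum>t\<in>S. a t *\<^sub>R t) = (\<Sum>t\<in>S. b t *\<^sub>R t)" and s: "s \<in> S"
  shows "a s = b s"
proof -
  have sum0: "(\<Sum>t\<in>S. (a t - b t) *\<^sub>R t) = 0" using eq by (simp add: scaleR_diff_left sum_subtractf)
  have all: "\<forall>c. (\<Sum>v\<in>S. c v *\<^sub>R v) = 0 \<longrightarrow> (\<forall>v\<in>S. c v = 0)"
    using independent_explicit[THEN iffD1, OF ind] by (rule conjunct2)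
  have "\<forall>v\<in>S. a v - b v = 0" using all[rule_format, of "\<lambda>t. a t - b t"] sum0 by simp
  then have "a s - b s = 0" using s by blast
  then show ?thesis by simp
qed

lemma relint_cone_pos:
  fixes S :: "'a::euclidean_space set"
  assumes ind: "independent S" and u: "u \<in> rel_interior (convex_cone hull S)"
    and ua: "u = (\<Sum>t\<in>S. a t *\<^sub>R t)" and s: "s \<in> S"
  shows "a s > 0"
proof -
  have fin: "finite S" using indep_fin[OF ind] .
  have sC: "s \<in> convex_cone hull S" by (rule hull_inc[OF s])
  have all: "\<forall>x\<in>convex_cone hull S. \<exists>e. e > 1 \<and> (1 - e) *\<^sub>R x + e *\<^sub>R u \<in> convex_cone hull S"
    by (rule iffD1[OF convex_rel_interior_iff[OF convex_convex_cone_hull convex_cone_hull_nonempty] u])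
  obtain e where e: "e > 1" "(1 - e) *\<^sub>R s + e *\<^sub>R u \<in> convex_cone hull S"
    using bspec[OF all sC] by blast
  have "\<exists>b. (\<forall>t\<in>S. 0 \<le> b t) \<and> (1 - e) *\<^sub>R s + e *\<^sub>R u = (\<Sum>t\<in>S. b t *\<^sub>R t)"
    using e(2) unfolding cone_finite[OF fin] mem_Collect_eq .
  then obtain b where b: "\<forall>t\<in>S. 0 \<le> b t" "(1 - e) *\<^sub>R s + e *\<^sub>R u = (\<Sum>t\<in>S. b t *\<^sub>R t)"
    by blast
  have "(\<Sum>t\<in>S. (e * a t + (if t = s then 1 - e else 0)) *\<^sub>R t)
      = e *\<^sub>R u + (\<Sum>t\<in>S. (if t = s then 1 - e else 0) *\<^sub>R t)"
    by (simp add: ua scaleR_add_left sum.distrib scaleR_sum_right)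
  also have "\<dots> = (1 - e) *\<^sub>R s + e *\<^sub>R u" using sum_delta_scale[OF fin s] by simp
  finally have "e * a s + (1 - e) = b s"
    using indep_coeff_unique[OF ind _ s, of "\<lambda>t. e * a t + (if t = s then 1 - e else 0)" b] b(2) by simp
  then have "e * a s \<ge> e - 1" using b(1) s by force
  then have "e * a s > 0" using e(1) by linarith
  then show ?thesis using e(1) by (simp add: zero_less_mult_iff)
qed

lemma closure_rows:
  fixes \<sigma> :: "'m::finite \<Rightarrow> 'a::euclidean_space set"
  assumes cv: "\<And>j. convex (\<sigma> j)" and cl: "\<And>j. closed (\<sigma> j)" and ne: "\<And>j. \<sigma> j \<noteq> {}"
  shows "closure {U::'a^'m. \<forall>j. U $ j \<in> rel_interior (\<sigma> j)} = {U. \<forall>j. U $ j \<in> \<sigma> j}"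
proof
  have clo: "closed {U::'a^'m. \<forall>j. U $ j \<in> \<sigma> j}" using cl by (intro closed_vector_box) blast
  have sub: "{U::'a^'m. \<forall>j. U $ j \<in> rel_interior (\<sigma> j)} \<subseteq> {U. \<forall>j. U $ j \<in> \<sigma> j}"
    using rel_interior_subset by blast
  show "closure {U::'a^'m. \<forall>j. U $ j \<in> rel_interior (\<sigma> j)} \<subseteq> {U. \<forall>j. U $ j \<in> \<sigma> j}"
    by (rule closure_minimal[OF sub clo])
  show "{U. \<forall>j. U $ j \<in> \<sigma> j} \<subseteq> closure {U::'a^'m. \<forall>j. U $ j \<in> rel_interior (\<sigma> j)}"
  proof
    fix U :: "'a^'m" assume U: "U \<in> {U. \<forall>j. U $ j \<in> \<sigma> j}"
    have "\<forall>j. \<exists>w. w \<in> rel_interior (\<sigma> j)"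
    proof
      fix j show "\<exists>w. w \<in> rel_interior (\<sigma> j)" using rel_interior_eq_empty[OF cv[of j]] ne[of j] by blast
    qed
    then have "\<exists>w. \<forall>j. w j \<in> rel_interior (\<sigma> j)" by (rule choice)
    then obtain w where w: "\<And>j. w j \<in> rel_interior (\<sigma> j)" by blast
    define W :: "'a^'m" where "W = (\<chi> j. w j)"
    show "U \<in> closure {U::'a^'m. \<forall>j. U $ j \<in> rel_interior (\<sigma> j)}"
      unfolding closure_approachable
    proof (intro allI impI)
      fix e :: real assume e: "e > 0"
      define n where "n = norm (U - W)"
      define t where "t = min 1 (e / (2 * (n + 1)))"
      have n0: "n \<ge> 0" unfolding n_def by simp
      have t: "0 < t" "t \<le> 1" unfolding t_def using e n0 by auto
      define Y where "Y = U - t *\<^sub>R (U - W)"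
      have "Y $ j \<in> rel_interior (\<sigma> j)" for j
      proof -
        have "U $ j \<in> closure (\<sigma> j)" using U closure_subset by blast
        then have "U $ j - t *\<^sub>R (U $ j - w j) \<in> rel_interior (\<sigma> j)"
          by (rule rel_interior_closure_convex_shrink[OF cv w _ t])
        then show ?thesis by (simp add: Y_def W_def)
      qed
      moreover have "dist Y U < e"
      proof -
        have "dist Y U = t * n" by (simp add: Y_def n_def dist_norm t(1) less_imp_le)
        also have "\<dots> \<le> (e / (2 * (n + 1))) * n" unfolding t_def using n0 by (intro mult_right_mono) auto
        also have "\<dots> < e"
        proof -
          have "(e / (2 * (n + 1))) * n = e * (n / (2 * (n + 1)))" by simp
          also have "n / (2 * (n + 1)) < 1" using n0 by (simp add: field_simps)
          then have "e * (n / (2 * (n + 1))) < e * 1" using e by (intro mult_strict_left_mono) auto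
          finally show ?thesis by simp
        qed
        finally show ?thesis .
      qed
      ultimately show "\<exists>y\<in>{U::'a^'m. \<forall>j. U $ j \<in> rel_interior (\<sigma> j)}. dist y U < e" by blast
    qed
  qed
qed

lemma row_upd_in_face:
  fixes C :: "('a::euclidean_space ^ 'm::finite) set"
  assumes F: "F face_of C" and Cdef: "C = {U. \<forall>j. U $ j \<in> \<sigma> j}"
    and W: "W \<in> F" and W': "W' \<in> F"
  shows "(\<chi> i. if i = j then W' $ j else W $ i) \<in> F"
proof -
  define X where "X = (\<chi> i. if i = j then W' $ j else W $ i)"
  define Y where "Y = (\<chi> i. if i = j then W $ j else W' $ i)"
  have FC: "F \<subseteq> C" using F face_of_imp_subset by blast
  have XC: "X \<in> C" and YC: "Y \<in> C" using FC W W' unfolding Cdef X_def Y_def by auto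
  have mid: "midpoint X Y = midpoint W W'"
    by (simp add: vec_eq_iff X_def Y_def midpoint_def algebra_simps)
  have "midpoint W W' \<in> F"
  proof -
    have "convex F" using F face_of_imp_convex by blast
    then have "(1/2) *\<^sub>R W + (1/2) *\<^sub>R W' \<in> F" using W W' by (intro convexD) auto
    then show ?thesis by (simp add: midpoint_def scaleR_add_right)
  qed
  show ?thesis unfolding X_def[symmetric]
  proof (cases "X = Y")
    case True
    then have "X = midpoint X Y" by simp
    then show "X \<in> F" using mid `midpoint W W' \<in> F` by simp
  next
    case False
    then have "midpoint X Y \<in> open_segment X Y" by simp
    then show "X \<in> F" using face_ofD[OF F _ XC YC] mid `midpoint W W' \<in> F` by auto
  qed
qed

lemma face_rows:
  fixes \<sigma> :: "'m::finite \<Rightarrow> 'a::euclidean_space set"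
  assumes F: "F face_of {U::'a^'m. \<forall>j. U $ j \<in> \<sigma> j}" and Fne: "F \<noteq> {}"
  shows "\<exists>\<tau>. (\<forall>j. \<tau> j face_of \<sigma> j \<and> \<tau> j \<noteq> {}) \<and> F = {U. \<forall>j. U $ j \<in> \<tau> j}"
proof -
  define C where "C = {U::'a^'m. \<forall>j. U $ j \<in> \<sigma> j}"
  have FC: "F \<subseteq> C" using F face_of_imp_subset C_def by blast
  define \<tau> where "\<tau> j = (\<lambda>U. U $ j) ` F" for j
  have tf: "\<tau> j face_of \<sigma> j" for j
    unfolding face_of_def
  proof (intro conjI ballI impI)
    show "\<tau> j \<subseteq> \<sigma> j" using FC unfolding \<tau>_def C_def by auto
    have "convex F" using F face_of_imp_convex by blast
    then show "convex (\<tau> j)" unfolding \<tau>_def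
      by (intro convex_linear_image bounded_linear.linear[OF bounded_linear_vec_nth])
    fix a b x assume a: "a \<in> \<sigma> j" and b: "b \<in> \<sigma> j" and x: "x \<in> \<tau> j" and xs: "x \<in> open_segment a b"
    obtain W where W: "W \<in> F" "x = W $ j" using x unfolding \<tau>_def by blast
    obtain u where u: "a \<noteq> b" "0 < u" "u < 1" "x = (1 - u) *\<^sub>R a + u *\<^sub>R b"
      using xs unfolding in_segment by blast
    define Wa where "Wa = (\<chi> i. if i = j then a else W $ i)"
    define Wb where "Wb = (\<chi> i. if i = j then b else W $ i)"
    have WaC: "Wa \<in> C" and WbC: "Wb \<in> C" using W FC a b unfolding C_def Wa_def Wb_def by auto
    have Wj: "Wa $ j = a" "Wb $ j = b" by (simp_all add: Wa_def Wb_def)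
    have "Wa \<noteq> Wb" using u(1) Wj by auto
    moreover have "W = (1 - u) *\<^sub>R Wa + u *\<^sub>R Wb"
      using u(4) W(2) unfolding Wa_def Wb_def
      by (simp add: vec_eq_iff algebra_simps)
    ultimately have "W \<in> open_segment Wa Wb" using u(2,3) unfolding in_segment by blast
    then have "Wa \<in> F \<and> Wb \<in> F" using face_ofD[OF F[folded C_def] _ WaC WbC] W(1) by blast
    with Wj show "a \<in> \<tau> j" "b \<in> \<tau> j" unfolding \<tau>_def by (metis image_eqI)+
  qed
  have tne: "\<tau> j \<noteq> {}" for j using Fne unfolding \<tau>_def by blast
  have "F = {U. \<forall>j. U $ j \<in> \<tau> j}"
  proof
    show "F \<subseteq> {U. \<forall>j. U $ j \<in> \<tau> j}" unfolding \<tau>_def by blast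
    show "{U. \<forall>j. U $ j \<in> \<tau> j} \<subseteq> F"
    proof
      fix U :: "'a^'m" assume U: "U \<in> {U. \<forall>j. U $ j \<in> \<tau> j}"
      obtain W0 where W0: "W0 \<in> F" using Fne by blast
      have "\<forall>j. \<exists>W. W \<in> F \<and> U $ j = W $ j" using U unfolding \<tau>_def by blast
      then have "\<exists>Wj. \<forall>j. Wj j \<in> F \<and> U $ j = Wj j $ j" by (rule choice)
      then obtain Wj where Wj: "\<And>j. Wj j \<in> F" "\<And>j. U $ j = Wj j $ j" by blast
      have ind: "(\<chi> i. if i \<in> J then U $ i else W0 $ i) \<in> F" if "finite J" for J
        using that
      proof (induction J rule: finite_induct)
        case empty
        have "(\<chi> i. if i \<in> {} then U $ i else W0 $ i) = W0" by (simp add: vec_eq_iff)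
        then show ?case using W0 by simp
      next
        case (insert j J)
        let ?X = "(\<chi> i. if i \<in> J then U $ i else W0 $ i)"
        have "(\<chi> i. if i = j then Wj j $ j else ?X $ i) \<in> F"
          by (rule row_upd_in_face[OF F refl insert.IH Wj(1)])
        moreover have "(\<chi> i. if i = j then Wj j $ j else ?X $ i) = (\<chi> i. if i \<in> insert j J then U $ i else W0 $ i)"
          using Wj(2) by (simp add: vec_eq_iff)
        ultimately show ?case by simp
      qed
      have "(\<chi> i. if i \<in> UNIV then U $ i else W0 $ i) = U" by (simp add: vec_eq_iff)
      then show "U \<in> F" using ind[of UNIV] by simp
    qed
  qed
  then show ?thesis using tf tne by blast
qed

lemma cone_hull_scale:
  fixes x y :: "'a::real_vector"
  assumes "x = c *\<^sub>R y" "c > 0"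
  shows "convex_cone hull {x} = convex_cone hull {y}"
proof
  have "x \<in> convex_cone hull {y}" unfolding assms(1)
    by (rule convex_cone_hull_mul[OF hull_inc[OF insertI1]]) (use assms(2) in simp)
  then show "convex_cone hull {x} \<subseteq> convex_cone hull {y}"
    by (intro hull_minimal) (auto simp: convex_cone_convex_cone_hull)
  have "y = (1 / c) *\<^sub>R x" using assms by simp
  moreover have "(1 / c) *\<^sub>R x \<in> convex_cone hull {x}"
    by (rule convex_cone_hull_mul[OF hull_inc[OF insertI1]]) (use assms(2) in simp)
  ultimately have "y \<in> convex_cone hull {x}" by simp
  then show "convex_cone hull {y} \<subseteq> convex_cone hull {x}"
    by (intro hull_minimal) (auto simp: convex_cone_convex_cone_hull)
qed

lemma aff_dim_ray:
  fixes s :: "'a::euclidean_space"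
  assumes "s \<noteq> 0"
  shows "aff_dim (convex_cone hull {s}) = 1"
proof -
  have "0 \<in> affine hull (convex_cone hull {s})"
    by (rule hull_inc[OF convex_cone_hull_contains_0])
  then have "aff_dim (convex_cone hull {s}) = int (dim (convex_cone hull {s}))"
    by (rule aff_dim_zero)
  moreover have "dim (convex_cone hull {s}) = 1"
  proof (rule order.antisym)
    have "convex_cone hull {s} \<subseteq> span {s}"
    proof
      fix x assume "x \<in> convex_cone hull {s}"
      then obtain m where "x = m *\<^sub>R s" unfolding cone_sing by blast
      then show "x \<in> span {s}" by (simp add: span_base span_scale)
    qed
    then have "dim (convex_cone hull {s}) \<le> dim (span {s})" by (rule dim_subset)
    also have "\<dots> = 1" using assms by (simp add: dim_insert)
    finally show "dim (convex_cone hull {s}) \<le> 1" .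
    have "{s} \<subseteq> convex_cone hull {s}" by (rule hull_subset)
    then have "dim {s} \<le> dim (convex_cone hull {s})" by (rule dim_subset)
    moreover have "dim {s} = 1" using assms by (simp add: dim_insert)
    ultimately show "1 \<le> dim (convex_cone hull {s})" by simp
  qed
  ultimately show ?thesis by simp
qed

locale pfan =
  fixes P :: "'a::euclidean_space set" and D :: "'a set set" and v :: "'n::finite \<Rightarrow> 'a"
  assumes poly: "polytope P" and fanD: "D = normal_fan P"
    and simpl: "simplicial_fan D" and rays: "ray_generators D v"
begin

lemma P_cpt: "compact P" using poly by (rule polytope_imp_compact)
lemma P_cvx: "convex P" using poly by (rule polytope_imp_convex)

lemma v_nz: "v k \<noteq> 0" using rays unfolding ray_generators_def by blast
lemma rays_inj: "inj (\<lambda>i. convex_cone hull {v i})" using rays unfolding ray_generators_def by blast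
lemma rays_eq: "{\<sigma>\<in>D. aff_dim \<sigma> = 1} = range (\<lambda>i. convex_cone hull {v i})"
  using rays unfolding ray_generators_def by blast

lemma ray_in: "convex_cone hull {v k} \<in> D"
proof -
  have "convex_cone hull {v k} \<in> range (\<lambda>i. convex_cone hull {v i})" by simp
  then show ?thesis unfolding rays_eq[symmetric] by blast
qed

lemma ray_classify: "\<sigma> \<in> D \<Longrightarrow> aff_dim \<sigma> = 1 \<Longrightarrow> \<exists>k. \<sigma> = convex_cone hull {v k}"
proof -
  assume "\<sigma> \<in> D" "aff_dim \<sigma> = 1"
  then have "\<sigma> \<in> range (\<lambda>i. convex_cone hull {v i})" unfolding rays_eq[symmetric] by blast
  then show ?thesis by blast
qed

lemma P_ne: "P \<noteq> {}"
proof
  assume "P = {}"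
  then have "D = {}" using fanD by (auto simp: normal_fan_def)
  then show False using ray_in by blast
qed

lemma memD: "\<sigma> \<in> D \<Longrightarrow> \<exists>F. F face_of P \<and> F \<noteq> {} \<and> \<sigma> = normal_cone P F"
  using fanD by (auto simp: normal_fan_def)

lemma amax_in: "normal_cone P (amax P c) \<in> D"
  using fanD amax_face[OF P_cpt P_cvx P_ne] amax_ne[OF P_cpt P_ne] by (auto simp: normal_fan_def)

lemma relint_amax: "c \<in> rel_interior (normal_cone P (amax P c))"
proof -
  obtain V where "finite V" "P = convex hull V" using poly unfolding polytope_def by blast
  then show ?thesis using nc_relint P_ne by blast
qed

lemma cell_convex: "\<sigma> \<in> D \<Longrightarrow> convex \<sigma>" using memD nc_convex by blast
lemma cell_closed: "\<sigma> \<in> D \<Longrightarrow> closed \<sigma>" using memD nc_closed by blast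
lemma cell_cc: "\<sigma> \<in> D \<Longrightarrow> convex_cone \<sigma>" using memD nc_convex_cone by blast
lemma cell_ne: "\<sigma> \<in> D \<Longrightarrow> \<sigma> \<noteq> {}" using memD nc_zero by blast

lemma exposed_cell: "\<sigma> \<in> D \<Longrightarrow> c \<in> \<sigma> \<Longrightarrow> normal_cone P (amax P c) face_of \<sigma>"
  using memD nc_exposed[OF P_cpt P_cvx] by blast

lemma cell_uniq:
  assumes s: "\<sigma> \<in> D" and u: "u \<in> rel_interior \<sigma>"
  shows "\<sigma> = normal_cone P (amax P u)"
proof -
  have u\<sigma>: "u \<in> \<sigma>" using u rel_interior_subset by blast
  have fa: "normal_cone P (amax P u) face_of \<sigma>" by (rule exposed_cell[OF s u\<sigma>])
  have "normal_cone P (amax P u) \<inter> rel_interior \<sigma> \<noteq> {}" using u nc_self by blast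
  then have "\<sigma> \<subseteq> normal_cone P (amax P u)" by (rule subset_of_face_of[OF fa subset_refl])
  moreover have "normal_cone P (amax P u) \<subseteq> \<sigma>" using face_of_imp_subset[OF fa] .
  ultimately show ?thesis by blast
qed

lemma cone_of_eq: "cone_of D u = normal_cone P (amax P u)"
  unfolding cone_of_def
proof (rule the_equality)
  show "normal_cone P (amax P u) \<in> D \<and> u \<in> rel_interior (normal_cone P (amax P u))"
    using amax_in relint_amax by blast
  fix \<sigma> assume "\<sigma> \<in> D \<and> u \<in> rel_interior \<sigma>"
  then show "\<sigma> = normal_cone P (amax P u)" using cell_uniq by blast
qed

lemma cone_of_in: "cone_of D u \<in> D" using cone_of_eq amax_in by simp
lemma cone_of_relint: "u \<in> rel_interior (cone_of D u)" using cone_of_eq relint_amax by simp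
lemma cone_of_unique: "\<sigma> \<in> D \<Longrightarrow> u \<in> rel_interior \<sigma> \<Longrightarrow> cone_of D u = \<sigma>"
  using cone_of_eq cell_uniq by simp

lemma face_in:
  assumes s: "\<sigma> \<in> D" and K: "K face_of \<sigma>" and Kne: "K \<noteq> {}"
  shows "K \<in> D"
proof -
  have "convex K" using K by (rule face_of_imp_convex)
  then obtain c where c: "c \<in> rel_interior K" using Kne rel_interior_eq_empty by blast
  have c\<sigma>: "c \<in> \<sigma>" using c rel_interior_subset face_of_imp_subset[OF K] by blast
  have f2: "normal_cone P (amax P c) face_of \<sigma>" by (rule exposed_cell[OF s c\<sigma>])
  have "rel_interior K \<inter> rel_interior (normal_cone P (amax P c)) \<noteq> {}" using c relint_amax by blast
  then have "K = normal_cone P (amax P c)" by (rule face_of_eq[OF K f2])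
  then show ?thesis using amax_in by simp
qed

lemma ray_cell: "convex_cone hull {v k} = normal_cone P (amax P (v k))"
proof -
  obtain F where F: "F face_of P" "F \<noteq> {}" "convex_cone hull {v k} = normal_cone P F"
    using memD[OF ray_in] by blast
  have "v k \<in> convex_cone hull {v k}" by (rule hull_inc[OF insertI1])
  then have "v k \<in> normal_cone P F" using F(3) by simp
  then have "F \<subseteq> amax P (v k)" using nc_iff face_of_imp_subset[OF F(1)] by blast
  then have "normal_cone P (amax P (v k)) \<subseteq> convex_cone hull {v k}" using nc_antimono F(3) by blast
  moreover have "convex_cone hull {v k} \<subseteq> normal_cone P (amax P (v k))"
    by (rule hull_minimal) (simp_all add: nc_self nc_convex_cone)
  ultimately show ?thesis by blast
qed

lemma ray_scale_eq:
  assumes "\<alpha> > 0" "\<beta> > 0" "\<alpha> *\<^sub>R v i = \<beta> *\<^sub>R v j"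
  shows "i = j"
proof -
  have "v i = (\<beta> / \<alpha>) *\<^sub>R v j" using assms
    by (metis divide_inverse_commute less_irrefl scaleR_scaleR scaleR_left_commute
        vector_fraction_eq_iff)
  then have "convex_cone hull {v i} = convex_cone hull {v j}"
    by (rule cone_hull_scale) (use assms in simp)
  then show ?thesis using rays_inj by (auto dest: injD)
qed

lemma v_inj: "inj v"
  by (rule injI) (rule ray_scale_eq[of 1 1]; simp)

end

context pfan
begin

lemma gen_of_S:
  assumes s\<sigma>: "\<sigma> \<in> D" and ind: "independent S" and \<sigma>S: "\<sigma> = convex_cone hull S" and s: "s \<in> S"
  shows "\<exists>k \<mu>. v k \<in> \<sigma> \<and> \<mu> > 0 \<and> s = \<mu> *\<^sub>R v k"
proof -
  have fin: "finite S" using indep_fin[OF ind] .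
  have sin: "s \<in> \<sigma>" unfolding \<sigma>S by (rule hull_inc[OF s])
  have s0: "s \<noteq> 0" using ind s dependent_zero by blast
  define \<rho> where "\<rho> = normal_cone P (amax P s)"
  have \<rho>f: "\<rho> face_of \<sigma>" unfolding \<rho>_def by (rule exposed_cell[OF s\<sigma> sin])
  have \<rho>\<sigma>: "\<rho> \<subseteq> \<sigma>" using face_of_imp_subset[OF \<rho>f] .
  have srel: "s \<in> rel_interior \<rho>" unfolding \<rho>_def by (rule relint_amax)
  have \<rho>cv: "convex \<rho>" unfolding \<rho>_def by (rule nc_convex)
  have \<rho>ne: "\<rho> \<noteq> {}" unfolding \<rho>_def using nc_zero by blast
  have all: "\<forall>x\<in>\<rho>. \<exists>e. e > 1 \<and> (1 - e) *\<^sub>R x + e *\<^sub>R s \<in> \<rho>"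
    by (rule iffD1[OF convex_rel_interior_iff[OF \<rho>cv \<rho>ne] srel])
  have "\<rho> \<subseteq> convex_cone hull {s}"
  proof
    fix x assume x: "x \<in> \<rho>"
    obtain e where e: "e > 1" "(1 - e) *\<^sub>R x + e *\<^sub>R s \<in> \<rho>" using bspec[OF all x] by blast
    have "x \<in> \<sigma>" using x \<rho>\<sigma> by blast
    then have "\<exists>b. (\<forall>t\<in>S. 0 \<le> b t) \<and> x = (\<Sum>t\<in>S. b t *\<^sub>R t)"
      unfolding \<sigma>S cone_finite[OF fin] mem_Collect_eq .
    then obtain b where b: "\<forall>t\<in>S. 0 \<le> b t" "x = (\<Sum>t\<in>S. b t *\<^sub>R t)" by blast
    have "(1 - e) *\<^sub>R x + e *\<^sub>R s \<in> \<sigma>" using e(2) \<rho>\<sigma> by blast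
    then have "\<exists>c. (\<forall>t\<in>S. 0 \<le> c t) \<and> (1 - e) *\<^sub>R x + e *\<^sub>R s = (\<Sum>t\<in>S. c t *\<^sub>R t)"
      unfolding \<sigma>S cone_finite[OF fin] mem_Collect_eq .
    then obtain c where c: "\<forall>t\<in>S. 0 \<le> c t" "(1 - e) *\<^sub>R x + e *\<^sub>R s = (\<Sum>t\<in>S. c t *\<^sub>R t)" by blast
    have "(\<Sum>t\<in>S. ((1 - e) * b t + (if t = s then e else 0)) *\<^sub>R t)
        = (1 - e) *\<^sub>R x + (\<Sum>t\<in>S. (if t = s then e else 0) *\<^sub>R t)"
      by (simp add: b(2) scaleR_add_left sum.distrib scaleR_sum_right)
    also have "\<dots> = (1 - e) *\<^sub>R x + e *\<^sub>R s" using sum_delta_scale[OF fin s] by simp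
    finally have eq: "(\<Sum>t\<in>S. ((1 - e) * b t + (if t = s then e else 0)) *\<^sub>R t) = (\<Sum>t\<in>S. c t *\<^sub>R t)"
      using c(2) by simp
    have bz: "b t = 0" if t: "t \<in> S" "t \<noteq> s" for t
    proof -
      have "(1 - e) * b t + (if t = s then e else 0) = c t"
        by (rule indep_coeff_unique[OF ind eq t(1)])
      then have "0 \<le> (1 - e) * b t" using c(1) t by simp
      then have "b t \<le> 0" using e(1) by (auto simp: zero_le_mult_iff)
      moreover have "b t \<ge> 0" using b(1) t by blast
      ultimately show ?thesis by simp
    qed
    have "x = (\<Sum>t\<in>S. (if t = s then b s else 0) *\<^sub>R t)"
      unfolding b(2) by (rule sum.cong) (use bz in auto)
    also have "\<dots> = b s *\<^sub>R s" by (rule sum_delta_scale[OF fin s])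
    finally have "x = b s *\<^sub>R s" .
    moreover have "b s \<ge> 0" using b(1) s by blast
    ultimately show "x \<in> convex_cone hull {s}" unfolding cone_sing by blast
  qed
  moreover have "convex_cone hull {s} \<subseteq> \<rho>"
    by (rule hull_minimal) (simp_all add: \<rho>_def nc_self nc_convex_cone)
  ultimately have \<rho>eq: "\<rho> = convex_cone hull {s}" by blast
  have "aff_dim \<rho> = 1" unfolding \<rho>eq by (rule aff_dim_ray[OF s0])
  moreover have "\<rho> \<in> D" unfolding \<rho>_def by (rule amax_in)
  ultimately obtain k where k: "\<rho> = convex_cone hull {v k}" using ray_classify by blast
  have "s \<in> convex_cone hull {s}" by (rule hull_inc[OF insertI1])
  then have "s \<in> convex_cone hull {v k}" using k \<rho>eq by simp
  then obtain \<mu> where \<mu>: "\<mu> \<ge> 0" "s = \<mu> *\<^sub>R v k" unfolding cone_sing by blast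
  have "\<mu> \<noteq> 0" using \<mu> s0 by auto
  then have "\<mu> > 0" using \<mu>(1) by simp
  moreover have "v k \<in> \<sigma>" using hull_inc[OF insertI1, of "v k" convex_cone] k \<rho>\<sigma> by blast
  ultimately show ?thesis using \<mu>(2) by blast
qed

lemma S_of_gen:
  assumes s\<sigma>: "\<sigma> \<in> D" and ind: "independent S" and \<sigma>S: "\<sigma> = convex_cone hull S" and vk: "v k \<in> \<sigma>"
  shows "\<exists>t\<in>S. \<exists>\<mu>>0. t = \<mu> *\<^sub>R v k"
proof -
  have fin: "finite S" using indep_fin[OF ind] .
  define R where "R = convex_cone hull {v k}"
  have Rf: "R face_of \<sigma>" unfolding R_def ray_cell by (rule exposed_cell[OF s\<sigma> vk])
  have "\<exists>a. (\<forall>t\<in>S. 0 \<le> a t) \<and> v k = (\<Sum>t\<in>S. a t *\<^sub>R t)"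
    using vk unfolding \<sigma>S cone_finite[OF fin] mem_Collect_eq .
  then obtain a where a: "\<forall>t\<in>S. 0 \<le> a t" "v k = (\<Sum>t\<in>S. a t *\<^sub>R t)" by blast
  have "\<exists>t0\<in>S. a t0 \<noteq> 0"
  proof (rule ccontr)
    assume "\<not> ?thesis"
    then have "v k = 0" unfolding a(2) by simp
    then show False using v_nz by blast
  qed
  then obtain t0 where t0: "t0 \<in> S" "a t0 \<noteq> 0" by blast
  have at0: "a t0 > 0" using t0 a(1) by (simp add: order_less_le)
  define x where "x = (2 * a t0) *\<^sub>R t0"
  define y where "y = 2 *\<^sub>R (v k - a t0 *\<^sub>R t0)"
  have x\<sigma>: "x \<in> \<sigma>" unfolding x_def \<sigma>S
    by (rule convex_cone_hull_mul[OF hull_inc[OF t0(1)]]) (use at0 in simp)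
  have "v k - a t0 *\<^sub>R t0 = (\<Sum>t\<in>S. (a t - (if t = t0 then a t0 else 0)) *\<^sub>R t)"
    by (simp add: a(2) scaleR_diff_left sum_subtractf sum_delta_scale[OF fin t0(1)])
  moreover have "\<forall>t\<in>S. 0 \<le> a t - (if t = t0 then a t0 else 0)" using a(1) by simp
  ultimately have "v k - a t0 *\<^sub>R t0 \<in> \<sigma>"
    unfolding \<sigma>S cone_finite[OF fin] mem_Collect_eq
    by (intro exI[of _ "\<lambda>t. a t - (if t = t0 then a t0 else 0)"] conjI)
  then have y\<sigma>: "y \<in> \<sigma>" unfolding y_def using cell_cc[OF s\<sigma>]
    by (simp add: convex_cone_def conic_def)
  have mid: "midpoint x y = v k"
    by (simp add: midpoint_def x_def y_def scaleR_add_right scaleR_diff_right)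
  have vR: "v k \<in> R" unfolding R_def by (rule hull_inc[OF insertI1])
  have "x \<in> R"
  proof (cases "x = y")
    case True
    then have "x = v k" using mid by simp
    then show ?thesis using vR by simp
  next
    case False
    then have "midpoint x y \<in> open_segment x y" by simp
    then show ?thesis using face_ofD[OF Rf _ x\<sigma> y\<sigma>] mid vR by simp
  qed
  then obtain \<mu> where \<mu>: "\<mu> \<ge> 0" "x = \<mu> *\<^sub>R v k" unfolding R_def cone_sing by blast
  have t00: "t0 \<noteq> 0" using ind t0(1) dependent_zero by blast
  have "t0 = (1 / (2 * a t0)) *\<^sub>R ((2 * a t0) *\<^sub>R t0)" using at0 by simp
  also have "\<dots> = (1 / (2 * a t0)) *\<^sub>R (\<mu> *\<^sub>R v k)" using \<mu>(2) unfolding x_def by simp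
  also have "\<dots> = (\<mu> / (2 * a t0)) *\<^sub>R v k" by simp
  finally have teq: "t0 = (\<mu> / (2 * a t0)) *\<^sub>R v k" .
  then have "\<mu> \<noteq> 0" using t00 by auto
  then have "\<mu> / (2 * a t0) > 0" using \<mu>(1) at0 by simp
  then show ?thesis using teq t0(1) by blast
qed

end

context pfan
begin

lemma gen_set:
  assumes s\<sigma>: "\<sigma> \<in> D"
  shows "independent (v ` gen_idx v \<sigma>) \<and> \<sigma> = convex_cone hull (v ` gen_idx v \<sigma>)"
proof -
  obtain S where ind: "independent S" and \<sigma>S: "\<sigma> = convex_cone hull S"
    using simpl s\<sigma> unfolding simplicial_fan_def by blast
  have fin: "finite S" using indep_fin[OF ind] .
  define I where "I = gen_idx v \<sigma>"
  have I: "k \<in> I \<longleftrightarrow> v k \<in> \<sigma>" for k unfolding I_def gen_idx_def by simp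
  have eq: "\<sigma> = convex_cone hull (v ` I)"
  proof
    show "\<sigma> \<subseteq> convex_cone hull (v ` I)" unfolding \<sigma>S
    proof (rule hull_minimal)
      show "S \<subseteq> convex_cone hull (v ` I)"
      proof
        fix s assume s: "s \<in> S"
        obtain k \<mu> where k: "v k \<in> \<sigma>" "\<mu> > 0" "s = \<mu> *\<^sub>R v k"
          using gen_of_S[OF s\<sigma> ind \<sigma>S s] by blast
        have "v k \<in> v ` I" using k(1) I by blast
        then have "v k \<in> convex_cone hull (v ` I)" by (rule hull_inc)
        then show "s \<in> convex_cone hull (v ` I)" unfolding k(3)
          by (rule convex_cone_hull_mul) (use k(2) in simp)
      qed
      show "convex_cone (convex_cone hull (v ` I))" by (rule convex_cone_convex_cone_hull)
    qed
    show "convex_cone hull (v ` I) \<subseteq> \<sigma>"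
    proof (rule hull_minimal)
      show "v ` I \<subseteq> \<sigma>" using I by blast
      show "convex_cone \<sigma>" by (rule cell_cc[OF s\<sigma>])
    qed
  qed
  have "\<forall>k\<in>I. \<exists>t. t \<in> S \<and> (\<exists>\<mu>>0. t = \<mu> *\<^sub>R v k)"
    using S_of_gen[OF s\<sigma> ind \<sigma>S] I by blast
  then obtain T where T: "\<forall>k\<in>I. T k \<in> S \<and> (\<exists>\<mu>>0. T k = \<mu> *\<^sub>R v k)"
    by (rule bchoice[THEN exE]) blast
  then have "\<forall>k\<in>I. \<exists>\<mu>. \<mu> > 0 \<and> T k = \<mu> *\<^sub>R v k" by blast
  then obtain M where M: "\<forall>k\<in>I. M k > 0 \<and> T k = M k *\<^sub>R v k"
    by (rule bchoice[THEN exE]) blast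
  have TS: "T k \<in> S" if "k \<in> I" for k using T that by blast
  have Mpos: "M k > 0" and TM: "T k = M k *\<^sub>R v k" if "k \<in> I" for k using M that by blast+
  have injT: "inj_on T I"
  proof (rule inj_onI)
    fix k k' assume kk: "k \<in> I" "k' \<in> I" "T k = T k'"
    then have "M k *\<^sub>R v k = M k' *\<^sub>R v k'" using TM by metis
    then show "k = k'" using ray_scale_eq Mpos kk by blast
  qed
  have injv: "inj_on v I" using v_inj by (simp add: inj_on_def inj_def)
  have finI: "finite I" by simp
  have "independent (v ` I)"
    unfolding independent_explicit
  proof (intro conjI allI impI ballI)
    show "finite (v ` I)" by simp
    fix c w assume c0: "(\<Sum>w\<in>v ` I. c w *\<^sub>R w) = 0" and w: "w \<in> v ` I"
    define d where "d s = (if s \<in> T ` I then c (v (the_inv_into I T s)) / M (the_inv_into I T s) else 0)" for s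
    have dT: "d (T k) = c (v k) / M k" if "k \<in> I" for k
      using that by (simp add: d_def the_inv_into_f_f[OF injT])
    have "(\<Sum>s\<in>S. d s *\<^sub>R s) = (\<Sum>s\<in>T ` I. d s *\<^sub>R s)"
      by (rule sum.mono_neutral_right) (use fin TS in \<open>auto simp: d_def\<close>)
    also have "\<dots> = (\<Sum>k\<in>I. d (T k) *\<^sub>R T k)" by (rule sum.reindex[OF injT, unfolded comp_def])
    also have "\<dots> = (\<Sum>k\<in>I. c (v k) *\<^sub>R v k)"
    proof (rule sum.cong[OF refl])
      fix k assume k: "k \<in> I"
      have "d (T k) *\<^sub>R T k = (c (v k) / M k) *\<^sub>R (M k *\<^sub>R v k)" using dT[OF k] TM[OF k] by simp
      also have "\<dots> = c (v k) *\<^sub>R v k" using Mpos[OF k] by simp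
      finally show "d (T k) *\<^sub>R T k = c (v k) *\<^sub>R v k" .
    qed
    also have "\<dots> = (\<Sum>w\<in>v ` I. c w *\<^sub>R w)" by (rule sum.reindex[OF injv, unfolded comp_def, symmetric])
    finally have "(\<Sum>s\<in>S. d s *\<^sub>R s) = 0" using c0 by simp
    moreover have "\<forall>c. (\<Sum>v\<in>S. c v *\<^sub>R v) = 0 \<longrightarrow> (\<forall>v\<in>S. c v = 0)"
      using independent_explicit[THEN iffD1, OF ind] by (rule conjunct2)
    ultimately have dz: "\<forall>s\<in>S. d s = 0" by blast
    obtain k where k: "k \<in> I" "w = v k" using w by blast
    have "c (v k) / M k = 0" using dz TS[OF k(1)] dT[OF k(1)] by simp
    then show "c w = 0" using Mpos[OF k(1)] k(2) by simp
  qed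
  then show ?thesis using eq unfolding I_def by blast
qed

lemma gen_idx_inj:
  assumes "\<sigma> \<in> D" "\<sigma>' \<in> D" "gen_idx v \<sigma> = gen_idx v \<sigma>'"
  shows "\<sigma> = \<sigma>'"
  using gen_set[OF assms(1)] gen_set[OF assms(2)] assms(3) by simp

lemma coord_pos:
  assumes s\<sigma>: "\<sigma> \<in> D" and u: "u \<in> rel_interior \<sigma>"
  shows "coord D v u i > 0 \<longleftrightarrow> v i \<in> \<sigma>"
proof -
  define I where "I = gen_idx v \<sigma>"
  have I: "k \<in> I \<longleftrightarrow> v k \<in> \<sigma>" for k unfolding I_def gen_idx_def by simp
  have co: "cone_of D u = \<sigma>" by (rule cone_of_unique[OF s\<sigma> u])
  have ind: "independent (v ` I)" and \<sigma>eq: "\<sigma> = convex_cone hull (v ` I)"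
    using gen_set[OF s\<sigma>] unfolding I_def by blast+
  have fin: "finite (v ` I)" by simp
  have injv: "inj_on v I" using v_inj by (simp add: inj_on_def inj_def)
  have "u \<in> \<sigma>" using u rel_interior_subset by blast
  then have "\<exists>a. (\<forall>w\<in>v ` I. 0 \<le> a w) \<and> u = (\<Sum>w\<in>v ` I. a w *\<^sub>R w)"
    unfolding \<sigma>eq cone_finite[OF fin] mem_Collect_eq .
  then obtain a where a: "\<forall>w\<in>v ` I. 0 \<le> a w" "u = (\<Sum>w\<in>v ` I. a w *\<^sub>R w)" by blast
  have apos: "a (v k) > 0" if "k \<in> I" for k
    by (rule relint_cone_pos[OF ind _ a(2)]) (use u \<sigma>eq that in auto)
  define c0 where "c0 k = (if k \<in> I then a (v k) else 0)" for k
  have reidx: "(\<Sum>w\<in>v ` I. f w *\<^sub>R w) = (\<Sum>k\<in>I. f (v k) *\<^sub>R v k)" for f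
    by (rule sum.reindex[OF injv, unfolded comp_def])
  have uc0: "u = (\<Sum>k\<in>I. c0 k *\<^sub>R v k)"
    unfolding a(2) reidx by (rule sum.cong) (auto simp: c0_def)
  have "coord D v u = c0"
    unfolding coord_def co I_def[symmetric]
  proof (rule the_equality)
    show "(\<forall>k. k \<notin> I \<longrightarrow> c0 k = 0) \<and> u = (\<Sum>k\<in>I. c0 k *\<^sub>R v k)"
      using uc0 by (simp add: c0_def)
    fix c assume c: "(\<forall>k. k \<notin> I \<longrightarrow> c k = 0) \<and> u = (\<Sum>k\<in>I. c k *\<^sub>R v k)"
    show "c = c0"
    proof
      fix k show "c k = c0 k"
      proof (cases "k \<in> I")
        case False then show ?thesis using c by (simp add: c0_def)
      next
        case True
        define g where "g f w = f (the_inv_into I v w)" for f :: "'n \<Rightarrow> real" and w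
        have gv: "g f (v k) = f k" if "k \<in> I" for f k
          using that by (simp add: g_def the_inv_into_f_f[OF injv])
        have "(\<Sum>w\<in>v ` I. g c w *\<^sub>R w) = (\<Sum>k\<in>I. c k *\<^sub>R v k)"
          unfolding reidx by (rule sum.cong) (simp_all add: gv)
        also have "\<dots> = (\<Sum>k\<in>I. c0 k *\<^sub>R v k)" using c uc0 by simp
        also have "\<dots> = (\<Sum>w\<in>v ` I. g c0 w *\<^sub>R w)"
          unfolding reidx by (rule sum.cong) (simp_all add: gv)
        finally have "g c (v k) = g c0 (v k)"
          by (rule indep_coeff_unique[OF ind]) (use True in simp)
        then show ?thesis using gv True by simp
      qed
    qed
  qed
  then have "coord D v u i = c0 i" by simp
  then show ?thesis using apos I by (auto simp: c0_def)
qed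

lemma graph_alt: "graph_of D v U = {(i, j). v i \<in> cone_of D (U $ j)}"
  unfolding graph_of_def using coord_pos[OF cone_of_in cone_of_relint] by simp

lemma graph_eq_iff:
  "graph_of D v U' = graph_of D v U \<longleftrightarrow> (\<forall>j. cone_of D (U' $ j) = cone_of D (U $ j))"
proof
  assume "\<forall>j. cone_of D (U' $ j) = cone_of D (U $ j)"
  then show "graph_of D v U' = graph_of D v U" unfolding graph_alt by simp
next
  assume g: "graph_of D v U' = graph_of D v U"
  show "\<forall>j. cone_of D (U' $ j) = cone_of D (U $ j)"
  proof
    fix j
    have "v i \<in> cone_of D (U' $ j) \<longleftrightarrow> v i \<in> cone_of D (U $ j)" for i
      using g unfolding graph_alt set_eq_iff by (metis (mono_tags) case_prod_conv mem_Collect_eq)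
    then have "gen_idx v (cone_of D (U' $ j)) = gen_idx v (cone_of D (U $ j))"
      unfolding gen_idx_def by blast
    then show "cone_of D (U' $ j) = cone_of D (U $ j)" by (rule gen_idx_inj[OF cone_of_in cone_of_in])
  qed
qed

lemma U_of_graph:
  "U_of D v (graph_of D v U) = {U'. \<forall>j. U' $ j \<in> rel_interior (cone_of D (U $ j))}"
proof -
  have "cone_of D (U' $ j) = cone_of D (U $ j) \<longleftrightarrow> U' $ j \<in> rel_interior (cone_of D (U $ j))" for U' j
  proof
    assume "cone_of D (U' $ j) = cone_of D (U $ j)"
    then show "U' $ j \<in> rel_interior (cone_of D (U $ j))" using cone_of_relint[of "U' $ j"] by simp
  next
    assume "U' $ j \<in> rel_interior (cone_of D (U $ j))"
    then show "cone_of D (U' $ j) = cone_of D (U $ j)" by (rule cone_of_unique[OF cone_of_in])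
  qed
  then show ?thesis unfolding U_of_def graph_eq_iff by simp
qed

lemma closure_U_of:
  "closure (U_of D v (graph_of D v U)) = {U'. \<forall>j. U' $ j \<in> cone_of D (U $ j)}"
  unfolding U_of_graph
  by (rule closure_rows) (simp_all add: cell_convex cell_closed cell_ne cone_of_in)

end

theorem lemma3p9:
  fixes \<Delta> :: "(real ^ 'd) set set"
    and v :: "'n::finite \<Rightarrow> real ^ 'd"
  assumes "simplicial_fan \<Delta>"
    and "polytopal_fan \<Delta>"
    and "ray_generators \<Delta> v"
  shows "subcomplex
           {closure (U_of \<Delta> v G) | G :: ('n \<times> 'm::finite) set.
              G \<in> graphs \<Delta> v \<and> \<not> has_matching_of_size G CARD('n)}
           (product_fan \<Delta> :: (real ^ 'd ^ 'm) set set)"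
proof -
  obtain P where poly: "polytope P" and fanD: "\<Delta> = normal_fan P"
    using assms(2) unfolding polytopal_fan_def by blast
  interpret pfan P \<Delta> v using poly fanD assms(1,3) by unfold_locales
  let ?Ups = "{closure (U_of \<Delta> v G) | G :: ('n \<times> 'm::finite) set.
              G \<in> graphs \<Delta> v \<and> \<not> has_matching_of_size G CARD('n)}"
  have part1: "?Ups \<subseteq> (product_fan \<Delta> :: (real ^ 'd ^ 'm) set set)"
  proof
    fix C assume "C \<in> ?Ups"
    then obtain G :: "('n \<times> 'm) set" where C: "C = closure (U_of \<Delta> v G)" and G: "G \<in> graphs \<Delta> v" by blast
    obtain U :: "real ^ 'd ^ 'm" where "G = graph_of \<Delta> v U" using G unfolding graphs_def by blast
    then have "C = {U'. \<forall>j. U' $ j \<in> cone_of \<Delta> (U $ j)}" using C closure_U_of by simp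
    moreover have "\<forall>j. cone_of \<Delta> (U $ j) \<in> \<Delta>" using cone_of_in by blast
    ultimately show "C \<in> product_fan \<Delta>" unfolding product_fan_def
      by (intro CollectI exI[of _ "\<lambda>j. cone_of \<Delta> (U $ j)"] conjI)
  qed
  have part2: "F \<in> ?Ups" if C: "C \<in> ?Ups" and F: "F face_of C" and Fne: "F \<noteq> {}" for C F
  proof -
    obtain G :: "('n \<times> 'm) set" where CG: "C = closure (U_of \<Delta> v G)" and G: "G \<in> graphs \<Delta> v"
      and nm: "\<not> has_matching_of_size G CARD('n)" using C by blast
    obtain U0 :: "real ^ 'd ^ 'm" where G0: "G = graph_of \<Delta> v U0" using G unfolding graphs_def by blast
    define \<sigma> where "\<sigma> j = cone_of \<Delta> (U0 $ j)" for j
    have Ceq: "C = {U. \<forall>j. U $ j \<in> \<sigma> j}" unfolding CG G0 closure_U_of \<sigma>_def ..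
    obtain \<tau> where \<tau>: "\<forall>j. \<tau> j face_of \<sigma> j \<and> \<tau> j \<noteq> {}" and Feq: "F = {U. \<forall>j. U $ j \<in> \<tau> j}"
      using face_rows[OF F[unfolded Ceq] Fne] by blast
    have \<tau>D: "\<tau> j \<in> \<Delta>" for j
      using face_in[OF cone_of_in[of "U0 $ j"]] \<tau> unfolding \<sigma>_def by blast
    have "\<forall>j. \<exists>w. w \<in> rel_interior (\<tau> j)"
    proof
      fix j show "\<exists>w. w \<in> rel_interior (\<tau> j)"
        using rel_interior_eq_empty[OF cell_convex[OF \<tau>D[of j]]] \<tau> by blast
    qed
    then have "\<exists>u. \<forall>j. u j \<in> rel_interior (\<tau> j)" by (rule choice)
    then obtain u where u: "\<And>j. u j \<in> rel_interior (\<tau> j)" by blast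
    define U1 :: "real ^ 'd ^ 'm" where "U1 = (\<chi> j. u j)"
    define G' where "G' = graph_of \<Delta> v U1"
    have co: "cone_of \<Delta> (U1 $ j) = \<tau> j" for j
      unfolding U1_def vec_lambda_beta by (rule cone_of_unique[OF \<tau>D u])
    have Fcl: "F = closure (U_of \<Delta> v G')"
      unfolding G'_def closure_U_of co Feq ..
    have sub: "G' \<subseteq> G"
    proof
      fix e assume e: "e \<in> G'"
      obtain i j where ij: "e = (i, j)" by fastforce
      have "v i \<in> \<tau> j" using e ij unfolding G'_def graph_alt co by simp
      then have "v i \<in> \<sigma> j" using \<tau> face_of_imp_subset by blast
      then show "e \<in> G" unfolding G0 graph_alt ij \<sigma>_def by simp
    qed
    have nm': "\<not> has_matching_of_size G' CARD('n)"
    proof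
      assume "has_matching_of_size G' CARD('n)"
      then obtain M where Mm: "is_matching G' M" "finite M" "card M = CARD('n)"
        unfolding has_matching_of_size_def by blast
      have m1: "M \<subseteq> G'" and m2: "\<forall>e\<in>M. \<forall>e'\<in>M. e \<noteq> e' \<longrightarrow> fst e \<noteq> fst e' \<and> snd e \<noteq> snd e'"
        using Mm(1) unfolding is_matching_def by simp_all
      have "is_matching G M" unfolding is_matching_def using subset_trans[OF m1 sub] m2 by simp
      then have "has_matching_of_size G CARD('n)"
        using `finite M` `card M = CARD('n)` unfolding has_matching_of_size_def by blast
      then show False using nm by blast
    qed
    have "G' \<in> graphs \<Delta> v" unfolding G'_def graphs_def by simp
    then show "F \<in> ?Ups" using Fcl nm' by blast
  qed
  show ?thesis unfolding subcomplex_def using part1 part2 by blast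
qed

end
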